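(* If $\bm{\Omega}$ is positive definite, then a normal mode transformation exists.
   Context: Fix an integer $N\ge 1$, real numbers $v$ with $|v|<1$, $L>0$, $L_{\star}\ge 0$, an integer $M\ge 1$ and real coefficients $c_{1}=1,c_{2},\dots,c_{M}$. Let $F(k)=\sum_{i=1}^{M}(-1)^{i-1}c_{i}L_{\star}^{2i-2}k^{2i-1}$ and $k_{n}=n\pi/L$, and assume $F(k_{n})^{2}\neq v^{2}k_{n}^{2}$ for $n=1,\dots,N$. Put $u_{n}=\sqrt{|F(k_{n})^{2}-v^{2}k_{n}^{2}|}/k_{n}>0$, and $\varepsilon_{n}=1$ if $F(k_{n})^{2}-v^{2}k_{n}^{2}>0$, $\varepsilon_{n}=0$ otherwise. Define $N\times N$ matrices $\bm\sigma,\bm\rho,\bm\xi$ by $\sigma_{nn}=0$, $\sigma_{nm}=\dfrac{2iv\sqrt{nm}\,[1-(-1)^{n+m}]}{\pi\sqrt{u_{n}u_{m}}\,(m^{2}-n^{2})}$ for $n\neq m$, $\bm\rho=\mathrm{diag}(n u_{n}\varepsilon_{n})$, $\bm\xi=\mathrm{diag}(-n u_{n}(1-\varepsilon_{n}))$. With $\mathbf{I}$ the $N\times N$ identity, define the $2N\times 2N$ matrices $\bm{\Sigma}=\begin{pmatrix}\mathbf{I}&\mathbf{0}\\ \mathbf{0}&-\mathbf{I}\end{pmatrix}$, $\bm{\Gamma}=\begin{pmatrix}\mathbf{0}&\mathbf{I}\\ \mathbf{I}&\mathbf{0}\end{pmatrix}$, $\mathbf{R}=\bm{\Sigma}-\begin{pmatrix}\bm\sigma&\bm\sigma\\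 \bm\sigma&\bm\sigma\end{pmatrix}$, $\bm{\Omega}=\begin{pmatrix}\bm\rho&\bm\xi\\ \bm\xi&\bm\rho\end{pmatrix}$. Standing assumption: $\mathbf{R}$ is invertible. Let $\mathbf{D}=\mathbf{R}^{-1}\bm{\Omega}$. Here ${}^{*}$ denotes entrywise complex conjugation and ${}^{\mathrm{H}}$ the conjugate transpose. A normal mode transformation is a $2N\times2N$ matrix $\mathbf{T}$ such that (i) $\mathbf{T}^{\mathrm{H}}\mathbf{R}\mathbf{T}=\bm{\Sigma}$; (ii) $\mathbf{T}=\bm{\Gamma}\mathbf{T}^{*}\bm{\Gamma}$; (iii) $\mathbf{T}^{-1}\mathbf{D}\mathbf{T}=\mathrm{diag}(\mu_{1},\dots,\mu_{N},-\mu_{1},\dots,-\mu_{N})$ for some real numbers $\mu_{n}>0$, where $\mathbf{T}^{-1}=\bm{\Sigma}\mathbf{T}^{\mathrm{H}}\mathbf{R}$. *)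

theory Defs
  imports Complex_Main "Jordan_Normal_Form.Matrix"
begin

text \<open>Indices: the paper's indices n,m = 1..N correspond to 0-based matrix
  indices i = n - 1, j = m - 1.  Block matrices are 2N x 2N.\<close>

definition Ffun :: "nat \<Rightarrow> (nat \<Rightarrow> real) \<Rightarrow> real \<Rightarrow> real \<Rightarrow> real" where
  "Ffun M c Ls k = (\<Sum>i = 1..M. (-1) ^ (i - 1) * c i * Ls ^ (2 * i - 2) * k ^ (2 * i - 1))"

definition kk :: "real \<Rightarrow> nat \<Rightarrow> real" where
  "kk L n = real n * pi / L"

definition disc :: "real \<Rightarrow> real \<Rightarrow> real \<Rightarrow> nat \<Rightarrow> (nat \<Rightarrow> real) \<Rightarrow> nat \<Rightarrow> real" where
  "disc v L Ls M c n = (Ffun M c Ls (kk L n))\<^sup>2 - v\<^sup>2 * (kk L n)\<^sup>2"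

definition uu :: "real \<Rightarrow> real \<Rightarrow> real \<Rightarrow> nat \<Rightarrow> (nat \<Rightarrow> real) \<Rightarrow> nat \<Rightarrow> real" where
  "uu v L Ls M c n = sqrt \<bar>disc v L Ls M c n\<bar> / kk L n"

definition epsn :: "real \<Rightarrow> real \<Rightarrow> real \<Rightarrow> nat \<Rightarrow> (nat \<Rightarrow> real) \<Rightarrow> nat \<Rightarrow> real" where
  "epsn v L Ls M c n = (if disc v L Ls M c n > 0 then 1 else 0)"

definition sigma_mat :: "nat \<Rightarrow> real \<Rightarrow> real \<Rightarrow> real \<Rightarrow> nat \<Rightarrow> (nat \<Rightarrow> real) \<Rightarrow> complex mat" where
  "sigma_mat N v L Ls M c = mat N N (\<lambda>(i, j).
     if i = j then 0 else
     (let n = i + 1; m = j + 1 in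
       (2 * \<i> * complex_of_real (v * sqrt (real (n * m)) * (1 - (-1) ^ (n + m))))
       / complex_of_real (pi * sqrt (uu v L Ls M c n * uu v L Ls M c m)
                          * (real (m ^ 2) - real (n ^ 2)))))"

definition rho_mat :: "nat \<Rightarrow> real \<Rightarrow> real \<Rightarrow> real \<Rightarrow> nat \<Rightarrow> (nat \<Rightarrow> real) \<Rightarrow> real mat" where
  "rho_mat N v L Ls M c = mat_diag N (\<lambda>i. real (i + 1) * uu v L Ls M c (i + 1) * epsn v L Ls M c (i + 1))"

definition xi_mat :: "nat \<Rightarrow> real \<Rightarrow> real \<Rightarrow> real \<Rightarrow> nat \<Rightarrow> (nat \<Rightarrow> real) \<Rightarrow> real mat" where
  "xi_mat N v L Ls M c = mat_diag N (\<lambda>i. - (real (i + 1) * uu v L Ls M c (i + 1) * (1 - epsn v L Ls M c (i + 1))))"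

definition Sigma_mat :: "nat \<Rightarrow> complex mat" where
  "Sigma_mat N = four_block_mat (1\<^sub>m N) (0\<^sub>m N N) (0\<^sub>m N N) (- 1\<^sub>m N)"

definition Gamma_mat :: "nat \<Rightarrow> complex mat" where
  "Gamma_mat N = four_block_mat (0\<^sub>m N N) (1\<^sub>m N) (1\<^sub>m N) (0\<^sub>m N N)"

definition R_mat :: "nat \<Rightarrow> real \<Rightarrow> real \<Rightarrow> real \<Rightarrow> nat \<Rightarrow> (nat \<Rightarrow> real) \<Rightarrow> complex mat" where
  "R_mat N v L Ls M c = (let s = sigma_mat N v L Ls M c in Sigma_mat N - four_block_mat s s s s)"

definition Omega_real :: "nat \<Rightarrow> real \<Rightarrow> real \<Rightarrow> real \<Rightarrow> nat \<Rightarrow> (nat \<Rightarrow> real) \<Rightarrow> real mat" where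
  "Omega_real N v L Ls M c =
     four_block_mat (rho_mat N v L Ls M c) (xi_mat N v L Ls M c) (xi_mat N v L Ls M c) (rho_mat N v L Ls M c)"

definition Omega_mat :: "nat \<Rightarrow> real \<Rightarrow> real \<Rightarrow> real \<Rightarrow> nat \<Rightarrow> (nat \<Rightarrow> real) \<Rightarrow> complex mat" where
  "Omega_mat N v L Ls M c = map_mat complex_of_real (Omega_real N v L Ls M c)"

definition pos_def_mat :: "real mat \<Rightarrow> bool" where
  "pos_def_mat A \<longleftrightarrow> square_mat A \<and> A = transpose_mat A \<and>
     (\<forall>x \<in> carrier_vec (dim_row A). x \<noteq> 0\<^sub>v (dim_row A) \<longrightarrow> x \<bullet> (A *\<^sub>v x) > 0)"

definition inv_mat :: "complex mat \<Rightarrow> complex mat" where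
  "inv_mat A = (SOME B. B \<in> carrier_mat (dim_row A) (dim_row A) \<and> A * B = 1\<^sub>m (dim_row A) \<and> B * A = 1\<^sub>m (dim_row A))"

definition D_mat :: "nat \<Rightarrow> real \<Rightarrow> real \<Rightarrow> real \<Rightarrow> nat \<Rightarrow> (nat \<Rightarrow> real) \<Rightarrow> complex mat" where
  "D_mat N v L Ls M c = inv_mat (R_mat N v L Ls M c) * Omega_mat N v L Ls M c"

definition conj_mat :: "complex mat \<Rightarrow> complex mat" where
  "conj_mat A = map_mat cnj A"

definition adj_mat :: "complex mat \<Rightarrow> complex mat" where
  "adj_mat A = transpose_mat (map_mat cnj A)"

definition normal_mode_transformation ::
  "nat \<Rightarrow> real \<Rightarrow> real \<Rightarrow> real \<Rightarrow> nat \<Rightarrow> (nat \<Rightarrow> real) \<Rightarrow> complex mat \<Rightarrow> bool" where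
  "normal_mode_transformation N v L Ls M c T \<longleftrightarrow>
     T \<in> carrier_mat (2 * N) (2 * N) \<and>
     adj_mat T * R_mat N v L Ls M c * T = Sigma_mat N \<and>
     T = Gamma_mat N * conj_mat T * Gamma_mat N \<and>
     (\<exists>\<mu> :: nat \<Rightarrow> real. (\<forall>i < N. \<mu> i > 0) \<and>
        (Sigma_mat N * adj_mat T * R_mat N v L Ls M c) * D_mat N v L Ls M c * T
          = mat_diag (2 * N) (\<lambda>j. if j < N then complex_of_real (\<mu> j)
                                  else complex_of_real (- \<mu> (j - N))))"

end

theory Submission
  imports Defs "Jordan_Normal_Form.Char_Poly"
begin


lemma cnj_mult_self: "cnj z * z = complex_of_real ((cmod z)^2)"
  by (metis complex_norm_square mult.commute)

lemma sum_sq_zero: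
  fixes w :: "nat \<Rightarrow> complex"
  assumes "(\<Sum>k<n. cnj (w k) * w k) = 0" "i < n"
  shows "w i = 0"
proof -
  have e: "(\<Sum>k<n. cnj (w k) * w k) = complex_of_real (\<Sum>k<n. (cmod (w k))^2)"
    unfolding cnj_mult_self by simp
  have "complex_of_real (\<Sum>k<n. (cmod (w k))^2) = 0" using assms(1) unfolding e .
  then have "(\<Sum>k<n. (cmod (w k))^2) = 0" by (simp only: of_real_eq_0_iff)
  then have "\<forall>k\<in>{..<n}. (cmod (w k))^2 = 0"
    by (subst sum_nonneg_eq_0_iff[symmetric]) auto
  then show ?thesis using assms(2) by auto
qed

lemma delta_sum_left: "i < (n::nat) \<Longrightarrow> (\<Sum>k<n. (if i = k then 1 else 0) * f k) = (f i :: complex)"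
proof -
  assume i: "i < n"
  have "(\<Sum>k<n. (if i = k then 1 else 0) * f k) = (\<Sum>k<n. if k = i then f i else 0)"
    by (rule sum.cong) auto
  also have "\<dots> = f i" using i by (subst sum.delta) auto
  finally show ?thesis .
qed

lemma delta_sum_right: "j < (n::nat) \<Longrightarrow> (\<Sum>k<n. f k * (if k = j then 1 else 0)) = (f j :: complex)"
proof -
  assume i: "j < n"
  have "(\<Sum>k<n. f k * (if k = j then 1 else 0)) = (\<Sum>k<n. if k = j then f j else 0)"
    by (rule sum.cong) auto
  also have "\<dots> = f j" using i by (subst sum.delta) auto
  finally show ?thesis .
qed

lemma householder_unit:
  fixes a b :: "nat \<Rightarrow> complex"
  assumes ab: "(\<Sum>k<n. b k * a k) = 2" and ij: "i < n" "j < n"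
  shows "(\<Sum>k<n. ((if i = k then 1 else 0) - a i * b k) * ((if k = j then 1 else 0) - a k * b j))
     = (if i = j then 1 else 0)"
proof -
  have pt: "((if i = k then 1 else 0) - a i * b k) * ((if k = j then 1 else 0) - a k * b j)
     = (if i = k then 1 else 0) * (if k = j then 1 else 0) - (if i = k then 1 else 0) * (a k * b j)
       - a i * (b k * (if k = j then 1 else 0))
       + (a i * b j) * (b k * a k)" for k
    by (auto simp: algebra_simps)
  have s1: "(\<Sum>k<n. (if i = k then 1 else 0) * (if k = j then 1 else (0::complex))) = (if i = j then 1 else 0)"
    by (rule delta_sum_left[OF ij(1)])
  have s2: "(\<Sum>k<n. (if i = k then 1 else 0) * (a k * b j)) = a i * b j"
    by (rule delta_sum_left[OF ij(1)])
  have s3: "(\<Sum>k<n. a i * (b k * (if k = j then 1 else 0))) = a i * b j"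
    by (simp only: sum_distrib_left[symmetric] delta_sum_right[OF ij(2)])
  have s4: "(\<Sum>k<n. (a i * b j) * (b k * a k)) = 2 * (a i * b j)"
    by (simp add: sum_distrib_left[symmetric] ab)
  show ?thesis
    unfolding pt sum_subtractf sum.distrib s1 s2 s3 s4 by simp
qed

lemma householder:
  fixes e :: "nat \<Rightarrow> complex"
  assumes n: "0 < n" and e1: "(\<Sum>k<n. cnj (e k) * e k) = 1"
  shows "\<exists>H \<theta>. (\<forall>i<n. \<forall>j<n. H j i = cnj (H i j)) \<and>
     (\<forall>i<n. \<forall>j<n. (\<Sum>k<n. H i k * H k j) = (if i = j then 1 else 0)) \<and>
     (\<forall>i<n. (\<Sum>k<n. H i k * e k) = (if i = 0 then \<theta> else 0)) \<and> cnj \<theta> * \<theta> = 1"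
proof -
  define \<theta> where "\<theta> = (if e 0 = 0 then 1 else e 0 / complex_of_real (cmod (e 0)))"
  have th1: "cnj \<theta> * \<theta> = 1"
  proof (cases "e 0 = 0")
    case False
    then have "cmod (e 0) \<noteq> 0" by simp
    have "cnj \<theta> * \<theta> = cnj (e 0) * e 0 / (complex_of_real (cmod (e 0)) * complex_of_real (cmod (e 0)))"
      using False unfolding \<theta>_def by (simp add: complex_cnj_divide)
    also have "\<dots> = 1" unfolding cnj_mult_self using \<open>cmod (e 0) \<noteq> 0\<close>
      by (simp add: power2_eq_square)
    finally show ?thesis .
  qed (simp add: \<theta>_def)
  have th2: "cnj \<theta> * e 0 = complex_of_real (cmod (e 0))"
  proof (cases "e 0 = 0")
    case False
    then have "cmod (e 0) \<noteq> 0" by simp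
    have "cnj \<theta> * e 0 = cnj (e 0) * e 0 / complex_of_real (cmod (e 0))"
      using False unfolding \<theta>_def by (simp add: complex_cnj_divide)
    also have "\<dots> = complex_of_real (cmod (e 0))" unfolding cnj_mult_self using \<open>cmod (e 0) \<noteq> 0\<close>
      by (simp add: power2_eq_square)
    finally show ?thesis .
  qed (simp add: \<theta>_def)
  have th3: "\<theta> * cnj (e 0) = complex_of_real (cmod (e 0))"
    using arg_cong[OF th2, of cnj] by (simp add: mult.commute)
  define w where "w k = (if k = 0 then \<theta> else 0) - e k" for k
  define c where "c = (\<Sum>k<n. cnj (w k) * w k)"
  have ccnj: "cnj c = c" unfolding c_def by (simp add: mult.commute)
  have we: "(\<Sum>k<n. cnj (w k) * e k) = cnj \<theta> * e 0 - 1"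
  proof -
    have pt: "cnj (w k) * e k = (if k = 0 then cnj \<theta> * e 0 else 0) - cnj (e k) * e k" for k
      unfolding w_def by (simp add: algebra_simps)
    have "(\<Sum>k<n. cnj (w k) * e k) = (\<Sum>k<n. (if k = 0 then cnj \<theta> * e 0 else 0)) - (\<Sum>k<n. cnj (e k) * e k)"
      unfolding pt sum_subtractf ..
    also have "\<dots> = cnj \<theta> * e 0 - 1" using n e1 by simp
    finally show ?thesis .
  qed
  have cval: "c = 2 - 2 * complex_of_real (cmod (e 0))"
  proof -
    have pt: "cnj (w k) * w k = (if k = 0 then cnj (w 0) * \<theta> else 0) - cnj (w k) * e k" for k
      unfolding w_def by (simp add: algebra_simps)
    have "c = (\<Sum>k<n. (if k = 0 then cnj (w 0) * \<theta> else 0)) - (\<Sum>k<n. cnj (w k) * e k)"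
      unfolding c_def pt sum_subtractf ..
    also have "(\<Sum>k<n. (if k = 0 then cnj (w 0) * \<theta> else 0)) = cnj (w 0) * \<theta>"
      using n by simp
    also have "cnj (w 0) * \<theta> = cnj \<theta> * \<theta> - \<theta> * cnj (e 0)" unfolding w_def by (simp add: algebra_simps)
    finally show ?thesis using we th1 th2 th3 by simp
  qed
  show ?thesis
  proof (cases "c = 0")
    case True
    have w0: "w i = 0" if "i < n" for i using sum_sq_zero[of w n i] True that unfolding c_def by simp
    have ee: "e i = (if i = 0 then \<theta> else 0)" if "i < n" for i using w0[OF that] unfolding w_def by simp
    have "(\<Sum>k<n. (if i = k then 1 else 0) * e k) = (if i = 0 then \<theta> else 0)" if "i < n" for i
      using that ee by (simp add: delta_sum_left)
    then show ?thesis
      apply (intro exI[of _ "\<lambda>i j. if i = j then 1 else 0"] exI[of _ \<theta>])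
      using th1 by (auto simp: delta_sum_left)
  next
    case False
    define a where "a i = 2 * w i / c" for i
    define b where "b k = cnj (w k)" for k
    define H where "H i j = (if i = j then 1 else 0) - a i * b j" for i j
    have ab: "(\<Sum>k<n. b k * a k) = 2"
    proof -
      have "(\<Sum>k<n. b k * a k) = (\<Sum>k<n. 2 * (cnj (w k) * w k)) / c" unfolding a_def b_def
        by (simp add: sum_divide_distrib algebra_simps)
      also have "\<dots> = 2 * c / c" unfolding c_def sum_distrib_left[symmetric] ..
      finally show ?thesis using False by simp
    qed
    have herm: "H j i = cnj (H i j)" for i j
      unfolding H_def a_def b_def using ccnj by (simp add: mult.commute complex_cnj_divide)
    have unit: "(\<Sum>k<n. H i k * H k j) = (if i = j then 1 else 0)" if "i < n" "j < n" for i j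
      unfolding H_def using householder_unit[OF ab that] by simp
    have He: "(\<Sum>k<n. H i k * e k) = (if i = 0 then \<theta> else 0)" if "i < n" for i
    proof -
      have pt: "H i k * e k = (if i = k then 1 else 0) * e k - a i * (b k * e k)" for k
        unfolding H_def by (simp add: algebra_simps)
      have "(\<Sum>k<n. H i k * e k) = e i - a i * (\<Sum>k<n. cnj (w k) * e k)"
        unfolding pt sum_subtractf delta_sum_left[OF that] sum_distrib_left[symmetric] b_def ..
      also have "\<dots> = e i + w i"
      proof -
        have "a i * (cnj \<theta> * e 0 - 1) = - (w i * c) / c"
          unfolding a_def th2 cval by (simp add: algebra_simps)
        also have "\<dots> = - w i" using False by simp
        finally show ?thesis unfolding we by simp
      qed
      finally show ?thesis unfolding w_def by simp
    qed
    show ?thesis using herm unit He th1 by blast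
  qed
qed

thm_deps householder

lemma mm_assoc:
  fixes x :: "nat \<Rightarrow> complex"
  shows "(\<Sum>k<n. x k * (\<Sum>p<m. y k p * z p)) = (\<Sum>p<m. (\<Sum>k<n. x k * y k p) * z p)"
proof -
  have "(\<Sum>k<n. x k * (\<Sum>p<m. y k p * z p)) = (\<Sum>k<n. \<Sum>p<m. x k * y k p * z p)"
    by (simp add: sum_distrib_left mult.assoc)
  also have "\<dots> = (\<Sum>p<m. \<Sum>k<n. x k * y k p * z p)" by (rule sum.swap)
  also have "\<dots> = (\<Sum>p<m. (\<Sum>k<n. x k * y k p) * z p)" by (simp add: sum_distrib_right)
  finally show ?thesis .
qed

lemma eigvec_exists:
  fixes A :: "nat \<Rightarrow> nat \<Rightarrow> complex"
  assumes m: "0 < m"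
  shows "\<exists>a x. (\<forall>i<m. (\<Sum>k<m. A i k * x k) = a * x i) \<and> (\<exists>i<m. x i \<noteq> 0)"
proof -
  define AM where "AM = mat m m (\<lambda>(i,j). A i j)"
  have AM: "AM \<in> carrier_mat m m" unfolding AM_def by simp
  obtain as where cp: "char_poly AM = (\<Prod>a\<leftarrow>as. [:- a, 1:])" and len: "length as = m"
    using char_poly_factorized[OF AM] by blast
  obtain a rest where as: "as = a # rest" using len m by (cases as) auto
  have "poly (char_poly AM) a = 0" unfolding cp as by simp
  then have "eigenvalue AM a" using eigenvalue_root_char_poly[OF AM] by simp
  then obtain v where ev: "eigenvector AM v a" unfolding eigenvalue_def by blast
  then have v: "v \<in> carrier_vec m" and v0: "v \<noteq> 0\<^sub>v m" and Av: "AM *\<^sub>v v = a \<cdot>\<^sub>v v"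
    unfolding eigenvector_def using AM by auto
  have 1: "(\<Sum>k<m. A i k * v $ k) = a * v $ i" if "i < m" for i
  proof -
    have "(AM *\<^sub>v v) $ i = (a \<cdot>\<^sub>v v) $ i" using Av by simp
    then show ?thesis using that v unfolding AM_def
      by (simp add: scalar_prod_def atLeast0LessThan)
  qed
  have 2: "\<exists>i<m. v $ i \<noteq> 0"
  proof (rule ccontr)
    assume "\<not> ?thesis"
    then have "v = 0\<^sub>v m" using v by (intro eq_vecI) auto
    then show False using v0 by simp
  qed
  show ?thesis using 1 2 by blast
qed

lemma spectral:
  fixes A :: "nat \<Rightarrow> nat \<Rightarrow> complex"
  assumes "\<forall>i<n. \<forall>j<n. A j i = cnj (A i j)"
  shows "\<exists>U d. (\<forall>i<n. \<forall>j<n. (\<Sum>k<n. cnj (U k i) * U k j) = (if i = j then 1 else 0)) \<and>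
     (\<forall>i<n. \<forall>j<n. (\<Sum>k<n. A i k * U k j) = complex_of_real (d j) * U i j)"
  using assms
proof (induction n arbitrary: A)
  case 0
  then show ?case by simp
next
  case (Suc n)
  define m where "m = Suc n"
  have herm: "A j i = cnj (A i j)" if "i < m" "j < m" for i j using Suc.prems that unfolding m_def by blast
  obtain a x where ax: "\<forall>i<m. (\<Sum>k<m. A i k * x k) = a * x i" and x0: "\<exists>i<m. x i \<noteq> 0"
    using eigvec_exists[of m A] m_def by auto
  define r where "r = (\<Sum>k<m. (cmod (x k))^2)"
  have rpos: "r > 0"
  proof -
    obtain i where i: "i < m" "x i \<noteq> 0" using x0 by blast
    have "(cmod (x i))^2 \<le> r" unfolding r_def
      using i by (intro member_le_sum) auto
    moreover have "(cmod (x i))^2 > 0" using i by simp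
    ultimately show ?thesis by linarith
  qed
  define q where "q = 1 / sqrt r"
  define e where "e k = x k * complex_of_real q" for k
  have qq: "q * q = 1 / r" unfolding q_def using rpos by (simp add: divide_simps)
  have e1: "(\<Sum>k<m. cnj (e k) * e k) = 1"
  proof -
    have pt: "cnj (e k) * e k = cnj (x k) * x k * complex_of_real (q * q)" for k
      unfolding e_def by (simp add: algebra_simps)
    have "(\<Sum>k<m. cnj (e k) * e k) = (\<Sum>k<m. cnj (x k) * x k) * complex_of_real (q * q)"
      unfolding pt by (simp only: sum_distrib_right)
    also have "(\<Sum>k<m. cnj (x k) * x k) = complex_of_real r" unfolding r_def cnj_mult_self by simp
    also have "complex_of_real r * complex_of_real (q * q) = complex_of_real (r * (q * q))"
      by (simp only: of_real_mult)
    also have "r * (q * q) = 1" unfolding qq using rpos by simp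
    finally show ?thesis by simp
  qed
  have ea: "(\<Sum>k<m. A i k * e k) = a * e i" if "i < m" for i
  proof -
    have "(\<Sum>k<m. A i k * e k) = (\<Sum>k<m. A i k * x k) * complex_of_real q"
      unfolding e_def by (simp add: sum_distrib_right mult.assoc)
    then show ?thesis using ax that unfolding e_def by (simp add: mult.assoc)
  qed
  obtain H \<theta> where Hh: "\<forall>i<m. \<forall>j<m. H j i = cnj (H i j)"
    and Hu: "\<forall>i<m. \<forall>j<m. (\<Sum>k<m. H i k * H k j) = (if i = j then 1 else 0)"
    and He: "\<forall>i<m. (\<Sum>k<m. H i k * e k) = (if i = 0 then \<theta> else 0)"
    and th: "cnj \<theta> * \<theta> = 1"
    using householder[OF _ e1] m_def by blast
  have H0: "H i 0 = e i * cnj \<theta>" if "i < m" for i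
  proof -
    have "(\<Sum>k<m. H i k * (\<Sum>l<m. H k l * e l)) = (\<Sum>l<m. (\<Sum>k<m. H i k * H k l) * e l)"
      by (rule mm_assoc)
    also have "\<dots> = (\<Sum>l<m. (if i = l then 1 else 0) * e l)"
      using Hu that by (intro sum.cong) auto
    also have "\<dots> = e i" using that by (rule delta_sum_left)
    finally have 1: "(\<Sum>k<m. H i k * (\<Sum>l<m. H k l * e l)) = e i" .
    have "(\<Sum>k<m. H i k * (\<Sum>l<m. H k l * e l)) = (\<Sum>k<m. H i k * (if k = 0 then \<theta> else 0))"
      using He by (intro sum.cong) auto
    also have "\<dots> = H i 0 * \<theta>" using m_def by (simp add: if_distrib sum.delta cong: if_cong)
    finally have "H i 0 * \<theta> = e i" using 1 by simp
    then have hh: "H i 0 * \<theta> = e i" .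
    have "H i 0 = H i 0 * (cnj \<theta> * \<theta>)" using th by simp
    also have "\<dots> = (H i 0 * \<theta>) * cnj \<theta>" by (simp only: ac_simps)
    finally show ?thesis unfolding hh .
  qed

  have Hc: "cnj (H k p) = H p k" if "k < m" "p < m" for k p
    by (rule Hh[rule_format, OF that, symmetric])
  have Ac: "cnj (A k p) = A p k" if "k < m" "p < m" for k p
    by (rule herm[OF that, symmetric])
  define AH where "AH k j = (\<Sum>l<m. A k l * H l j)" for k j
  define B where "B i j = (\<Sum>k<m. H i k * AH k j)" for i j
  have AH0: "AH k 0 = a * e k * cnj \<theta>" if "k < m" for k
  proof -
    have "AH k 0 = (\<Sum>l<m. A k l * e l) * cnj \<theta>"
      unfolding AH_def sum_distrib_right using H0 by (intro sum.cong) (auto simp: mult.assoc)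
    then show ?thesis using ea[OF that] by simp
  qed
  have B0: "B i 0 = (if i = 0 then a else 0)" if "i < m" for i
  proof -
    have "B i 0 = (\<Sum>k<m. H i k * e k) * (a * cnj \<theta>)"
      unfolding B_def sum_distrib_right using AH0 by (intro sum.cong) (auto simp: algebra_simps)
    also have "\<dots> = (if i = 0 then \<theta> * cnj \<theta> * a else 0)" using He that by (simp add: algebra_simps)
    finally show ?thesis using th by (simp add: mult.commute)
  qed
  have Bh: "B j i = cnj (B i j)" if "i < m" "j < m" for i j
  proof -
    have "B j i = (\<Sum>k<m. \<Sum>l<m. H j k * A k l * H l i)"
      unfolding B_def AH_def by (simp add: sum_distrib_left mult.assoc)
    also have "\<dots> = (\<Sum>l<m. \<Sum>k<m. H j k * A k l * H l i)" by (rule sum.swap)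
    also have "\<dots> = (\<Sum>l<m. \<Sum>k<m. cnj (H i l * A l k * H k j))"
    proof (intro sum.cong refl)
      fix l k assume l: "l \<in> {..<m}" and k: "k \<in> {..<m}"
      have "cnj (H i l * A l k * H k j) = cnj (H i l) * cnj (A l k) * cnj (H k j)" by simp
      also have "\<dots> = H l i * A k l * H j k"
        using Hc[of i l] Ac[of l k] Hc[of k j] l k that by simp
      finally show "H j k * A k l * H l i = cnj (H i l * A l k * H k j)" by (simp only: ac_simps)
    qed
    also have "\<dots> = cnj (B i j)"
      unfolding B_def AH_def by (simp add: sum_distrib_left mult.assoc)
    finally show ?thesis .
  qed
  have acnj: "a = cnj a"
  proof -
    have B00: "B 0 0 = cnj (B 0 0)" using Bh[of 0 0] m_def by simp
    have b: "B 0 0 = a" using B0[of 0] m_def by simp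
    show "a = cnj a" using B00 unfolding b .
  qed
  have areal: "a = complex_of_real (Re a)"
  proof -
    have "Im a = 0" using arg_cong[OF acnj, of Im] by simp
    then show ?thesis by (simp add: complex_eq_iff)
  qed
  have B0j: "B 0 j = (if j = 0 then a else 0)" if "j < m" for j
  proof -
    have cnja: "cnj a = a" using acnj by simp
    have "B 0 j = cnj (B j 0)" using Bh[of j 0] that m_def by simp
    also have "\<dots> = cnj (if j = 0 then a else 0)" unfolding B0[OF that] ..
    also have "\<dots> = (if j = 0 then a else 0)" using cnja by simp
    finally show ?thesis .
  qed
  define B' where "B' i j = B (Suc i) (Suc j)" for i j
  have B'h: "\<forall>i<n. \<forall>j<n. B' j i = cnj (B' i j)" unfolding B'_def m_def
    by (intro allI impI Bh) (auto simp: m_def)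
  obtain U' d' where U'o: "\<forall>i<n. \<forall>j<n. (\<Sum>k<n. cnj (U' k i) * U' k j) = (if i = j then 1 else 0)"
    and U'e: "\<forall>i<n. \<forall>j<n. (\<Sum>k<n. B' i k * U' k j) = complex_of_real (d' j) * U' i j"
    using Suc.IH[OF B'h] by blast
  define F where "F k j = (if k = 0 then (if j = 0 then 1 else 0) else (if j = 0 then 0 else U' (k - 1) (j - 1)))" for k j
  define U where "U i j = (\<Sum>k<m. H i k * F k j)" for i j
  define d where "d j = (if j = 0 then Re a else d' (j - 1))" for j
  have Fo: "(\<Sum>k<m. cnj (F k i) * F k j) = (if i = j then 1 else 0)" if "i < m" "j < m" for i j
  proof -
    have "(\<Sum>k<m. cnj (F k i) * F k j) = cnj (F 0 i) * F 0 j + (\<Sum>k<n. cnj (F (Suc k) i) * F (Suc k) j)"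
      unfolding m_def by (rule sum.lessThan_Suc_shift)
    also have "\<dots> = (if i = j then 1 else 0)"
    proof (cases "i = 0 \<or> j = 0")
      case True
      then show ?thesis unfolding F_def by auto
    next
      case False
      then have "(\<Sum>k<n. cnj (F (Suc k) i) * F (Suc k) j) = (\<Sum>k<n. cnj (U' k (i - 1)) * U' k (j - 1))"
        unfolding F_def by simp
      also have "\<dots> = (if i - 1 = j - 1 then 1 else 0)"
      proof -
        have "i - 1 < n" "j - 1 < n" using that False m_def by auto
        then show ?thesis by (rule U'o[rule_format])
      qed
      finally show ?thesis using False unfolding F_def by auto
    qed
    finally show ?thesis .
  qed
  have BF: "(\<Sum>p<m. B k p * F p j) = complex_of_real (d j) * F k j" if "k < m" "j < m" for k j
  proof -
    have "(\<Sum>p<m. B k p * F p j) = B k 0 * F 0 j + (\<Sum>p<n. B k (Suc p) * F (Suc p) j)"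
      unfolding m_def by (rule sum.lessThan_Suc_shift)
    also have "\<dots> = complex_of_real (d j) * F k j"
    proof (cases "j = 0")
      case True
      then show ?thesis unfolding F_def d_def using B0[OF that(1)] areal by auto
    next
      case False
      then have s: "(\<Sum>p<n. B k (Suc p) * F (Suc p) j) = (\<Sum>p<n. B k (Suc p) * U' p (j - 1))"
        unfolding F_def by simp
      show ?thesis
      proof (cases "k = 0")
        case True
        have "B 0 (Suc p) = 0" if "p < n" for p using B0j[of "Suc p"] that m_def by simp
        then have "(\<Sum>p<n. B k (Suc p) * U' p (j - 1)) = 0" using True by simp
        then show ?thesis using s False True unfolding F_def by simp
      next
        case False2: False
        have "(\<Sum>p<n. B k (Suc p) * U' p (j - 1)) = (\<Sum>p<n. B' (k - 1) p * U' p (j - 1))"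
          unfolding B'_def using False2 by simp
        also have "\<dots> = complex_of_real (d' (j - 1)) * U' (k - 1) (j - 1)"
          using U'e that False False2 m_def by simp
        finally show ?thesis using s False False2 unfolding F_def d_def by simp
      qed
    qed
    finally show ?thesis .
  qed
  have Uo: "(\<Sum>k<m. cnj (U k i) * U k j) = (if i = j then 1 else 0)" if "i < m" "j < m" for i j
  proof -
    have "(\<Sum>k<m. cnj (U k i) * U k j) = (\<Sum>k<m. (\<Sum>p<m. cnj (F p i) * H p k) * U k j)"
    proof (rule sum.cong[OF refl])
      fix k assume k: "k \<in> {..<m}"
      have "cnj (U k i) = (\<Sum>p<m. cnj (H k p) * cnj (F p i))" unfolding U_def by simp
      also have "\<dots> = (\<Sum>p<m. cnj (F p i) * H p k)"
        using Hc k by (intro sum.cong refl) (simp add: mult.commute)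
      finally show "cnj (U k i) * U k j = (\<Sum>p<m. cnj (F p i) * H p k) * U k j" by simp
    qed
    also have "\<dots> = (\<Sum>p<m. cnj (F p i) * (\<Sum>k<m. H p k * U k j))"
      by (rule mm_assoc[symmetric])
    also have "\<dots> = (\<Sum>p<m. cnj (F p i) * F p j)"
    proof (rule sum.cong[OF refl])
      fix p assume p: "p \<in> {..<m}"
      have "(\<Sum>k<m. H p k * U k j) = (\<Sum>q<m. (\<Sum>k<m. H p k * H k q) * F q j)"
        unfolding U_def by (rule mm_assoc)
      also have "\<dots> = (\<Sum>q<m. (if p = q then 1 else 0) * F q j)"
        using Hu p by (intro sum.cong) auto
      also have "\<dots> = F p j" using p by (simp add: delta_sum_left)
      finally show "cnj (F p i) * (\<Sum>k<m. H p k * U k j) = cnj (F p i) * F p j" by simp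
    qed
    also have "\<dots> = (if i = j then 1 else 0)" using Fo that by simp
    finally show ?thesis .
  qed
  have AHB: "AH i q = (\<Sum>k<m. H i k * B k q)" if "i < m" for i q
  proof -
    have "(\<Sum>k<m. H i k * B k q) = (\<Sum>p<m. (\<Sum>k<m. H i k * H k p) * AH p q)"
      unfolding B_def by (rule mm_assoc)
    also have "\<dots> = (\<Sum>p<m. (if i = p then 1 else 0) * AH p q)"
      using Hu that by (intro sum.cong) auto
    also have "\<dots> = AH i q" using that by (simp add: delta_sum_left)
    finally show ?thesis by simp
  qed
  have Ue: "(\<Sum>k<m. A i k * U k j) = complex_of_real (d j) * U i j" if "i < m" "j < m" for i j
  proof -
    have "(\<Sum>k<m. A i k * U k j) = (\<Sum>q<m. AH i q * F q j)"
      unfolding U_def AH_def by (rule mm_assoc)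
    also have "\<dots> = (\<Sum>q<m. (\<Sum>k<m. H i k * B k q) * F q j)"
      using AHB that by simp
    also have "\<dots> = (\<Sum>k<m. H i k * (\<Sum>q<m. B k q * F q j))"
      by (rule mm_assoc[symmetric])
    also have "\<dots> = (\<Sum>k<m. H i k * (complex_of_real (d j) * F k j))"
      using BF that by (intro sum.cong) auto
    also have "\<dots> = complex_of_real (d j) * U i j"
      unfolding U_def by (simp add: sum_distrib_left algebra_simps)
    finally show ?thesis .
  qed
  show ?case using Uo Ue unfolding m_def by blast
qed



thm_deps spectral

lemma invol_bij:
  assumes "\<forall>i<n. g i < n" "\<forall>i<n. g (g i) = i"
  shows "bij_betw g {..<n} {..<n}"
  by (rule bij_betw_byWitness[of _ g]) (use assms in auto)

lemma sum_reindex_invol: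
  assumes "\<forall>i<n. g i < n" "\<forall>i<n. g (g i) = (i::nat)"
  shows "(\<Sum>k<n. f (g k)) = (\<Sum>k<n. f k)"
  using sum.reindex_bij_betw[OF invol_bij[OF assms], of f] .

lemma eig_orth:
  fixes K :: "nat \<Rightarrow> nat \<Rightarrow> complex"
  assumes Kh: "\<And>i j. i < n \<Longrightarrow> j < n \<Longrightarrow> cnj (K i j) = K j i"
    and ex: "\<And>i. i < n \<Longrightarrow> (\<Sum>l<n. K i l * x l) = complex_of_real \<alpha> * x i"
    and ey: "\<And>i. i < n \<Longrightarrow> (\<Sum>l<n. K i l * y l) = complex_of_real \<beta> * y i"
    and ne: "\<alpha> \<noteq> \<beta>"
  shows "(\<Sum>k<n. cnj (x k) * y k) = 0"
proof -
  have "(\<Sum>i<n. cnj (x i) * (\<Sum>l<n. K i l * y l)) = (\<Sum>l<n. (\<Sum>i<n. cnj (x i) * K i l) * y l)"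
    by (rule mm_assoc)
  also have "\<dots> = (\<Sum>l<n. (complex_of_real \<alpha> * cnj (x l)) * y l)"
  proof (rule sum.cong[OF refl])
    fix l assume l: "l \<in> {..<n}"
    have "(\<Sum>i<n. cnj (x i) * K i l) = cnj (\<Sum>i<n. K l i * x i)"
      using Kh l by (simp add: mult.commute)
    also have "\<dots> = complex_of_real \<alpha> * cnj (x l)" using ex l by simp
    finally show "(\<Sum>i<n. cnj (x i) * K i l) * y l = (complex_of_real \<alpha> * cnj (x l)) * y l" by simp
  qed
  finally have 1: "(\<Sum>i<n. cnj (x i) * (\<Sum>l<n. K i l * y l)) = complex_of_real \<alpha> * (\<Sum>k<n. cnj (x k) * y k)"
    by (simp add: sum_distrib_left mult.assoc)
  have 2: "(\<Sum>i<n. cnj (x i) * (\<Sum>l<n. K i l * y l)) = complex_of_real \<beta> * (\<Sum>k<n. cnj (x k) * y k)"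
    using ey by (simp add: sum_distrib_left algebra_simps)
  have "(complex_of_real \<alpha> - complex_of_real \<beta>) * (\<Sum>k<n. cnj (x k) * y k) = 0"
    using 1 2 by (simp add: algebra_simps)
  then show ?thesis using ne by simp
qed

lemma unitary_right:
  fixes U :: "nat \<Rightarrow> nat \<Rightarrow> complex"
  assumes Uo: "\<forall>i<n. \<forall>j<n. (\<Sum>k<n. cnj (U k i) * U k j) = (if i = j then 1 else 0)"
  shows "\<forall>i<n. \<forall>j<n. (\<Sum>k<n. U i k * cnj (U j k)) = (if i = j then 1 else 0)"
proof -
  define UM where "UM = mat n n (\<lambda>(i,j). U i j)"
  define UH where "UH = mat n n (\<lambda>(i,j). cnj (U j i))"
  have UM: "UM \<in> carrier_mat n n" and UH: "UH \<in> carrier_mat n n" unfolding UM_def UH_def by auto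
  have "UH * UM = 1\<^sub>m n"
  proof (rule eq_matI)
    fix i j assume "i < dim_row (1\<^sub>m n :: complex mat)" "j < dim_col (1\<^sub>m n :: complex mat)"
    then have ij: "i < n" "j < n" by auto
    show "(UH * UM) $$ (i, j) = 1\<^sub>m n $$ (i, j)"
      using ij Uo unfolding UM_def UH_def
      by (simp add: scalar_prod_def atLeast0LessThan row_def col_def)
  qed (auto simp: UM_def UH_def)
  then have "UM * UH = 1\<^sub>m n" using mat_mult_left_right_inverse[OF UH UM] by simp
  then show ?thesis
  proof (intro allI impI)
    fix i j assume e: "UM * UH = 1\<^sub>m n" and ij: "i < n" "j < n"
    have "(UM * UH) $$ (i,j) = 1\<^sub>m n $$ (i,j)" using e by simp
    then show "(\<Sum>k<n. U i k * cnj (U j k)) = (if i = j then 1 else 0)"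
      using ij unfolding UM_def UH_def
      by (simp add: scalar_prod_def atLeast0LessThan row_def col_def)
  qed
qed

lemma parseval:
  fixes U :: "nat \<Rightarrow> nat \<Rightarrow> complex"
  assumes Ur: "\<forall>i<n. \<forall>j<n. (\<Sum>k<n. U i k * cnj (U j k)) = (if i = j then 1 else 0)"
  shows "(\<Sum>k<n. cnj (\<Sum>i<n. cnj (U i k) * y i) * (\<Sum>i<n. cnj (U i k) * y i)) = (\<Sum>i<n. cnj (y i) * y i)"
proof -
  have "(\<Sum>k<n. cnj (\<Sum>i<n. cnj (U i k) * y i) * (\<Sum>i<n. cnj (U i k) * y i))
      = (\<Sum>k<n. (\<Sum>i<n. cnj (y i) * U i k) * (\<Sum>i'<n. cnj (U i' k) * y i'))"
    by (simp add: mult.commute)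
  also have "\<dots> = (\<Sum>i<n. cnj (y i) * (\<Sum>k<n. U i k * (\<Sum>i'<n. cnj (U i' k) * y i')))"
    by (rule mm_assoc[symmetric])
  also have "\<dots> = (\<Sum>i<n. cnj (y i) * y i)"
  proof (rule sum.cong[OF refl])
    fix i assume i: "i \<in> {..<n}"
    have "(\<Sum>k<n. U i k * (\<Sum>i'<n. cnj (U i' k) * y i')) = (\<Sum>i'<n. (\<Sum>k<n. U i k * cnj (U i' k)) * y i')"
      by (rule mm_assoc)
    also have "\<dots> = (\<Sum>i'<n. (if i = i' then 1 else 0) * y i')"
      using Ur i by (intro sum.cong refl) auto
    also have "\<dots> = y i" using i by (simp add: delta_sum_left)
    finally show "cnj (y i) * (\<Sum>k<n. U i k * (\<Sum>i'<n. cnj (U i' k) * y i')) = cnj (y i) * y i" by simp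
  qed
  finally show ?thesis .
qed

lemma abstract_nm:
  fixes N n :: nat and R :: "nat \<Rightarrow> nat \<Rightarrow> complex" and \<omega> :: "nat \<Rightarrow> real" and g :: "nat \<Rightarrow> nat"
  assumes n: "n = 2 * N"
    and g: "g = (\<lambda>i. if i < N then i + N else i - N)"
    and Rh: "\<And>i j. i < n \<Longrightarrow> j < n \<Longrightarrow> cnj (R i j) = R j i"
    and Rs: "\<And>i j. i < n \<Longrightarrow> j < n \<Longrightarrow> cnj (R (g i) (g j)) = - R i j"
    and Rinj: "\<And>x. (\<forall>i<n. (\<Sum>l<n. R i l * x l) = 0) \<Longrightarrow> (\<forall>l<n. x l = 0)"
    and wpos: "\<And>i. i < n \<Longrightarrow> \<omega> i > 0"
    and wg: "\<And>i. i < n \<Longrightarrow> \<omega> (g i) = \<omega> i"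
  shows "\<exists>T \<mu>. (\<forall>i<N. \<mu> i > 0) \<and>
   (\<forall>a<n. \<forall>b<n. (\<Sum>k<n. \<Sum>l<n. cnj (T k a) * R k l * T l b) = (if a = b then (if a < N then 1 else -1) else 0)) \<and>
   (\<forall>a<n. \<forall>b<n. T a b = cnj (T (g a) (g b))) \<and>
   (\<forall>a<n. \<forall>b<n. (\<Sum>k<n. cnj (T k a) * complex_of_real (\<omega> k) * T k b) =
        (if a = b then complex_of_real (\<mu> (if a < N then a else a - N)) else 0))"
proof -
  have gn: "g i < n" if "i < n" for i using that unfolding g n by auto
  have gg: "g (g i) = i" if "i < n" for i using that unfolding g n by auto
  have reidx: "(\<Sum>k<n. f (g k)) = (\<Sum>k<n. f k)" for f :: "nat \<Rightarrow> complex"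
    by (rule sum_reindex_invol) (use gn gg in auto)
  define s where "s i = sqrt (\<omega> i)" for i
  have spos: "s i > 0" if "i < n" for i unfolding s_def using wpos[OF that] by simp
  have sg: "s (g i) = s i" if "i < n" for i unfolding s_def using wg[OF that] by simp
  have ss: "s i * s i = \<omega> i" if "i < n" for i unfolding s_def using wpos[OF that] by simp
  define K where "K i j = R i j / complex_of_real (s i * s j)" for i j
  have Kh: "cnj (K i j) = K j i" if "i < n" "j < n" for i j
    unfolding K_def using Rh[OF that] by (simp add: complex_cnj_divide mult.commute)
  have Ks: "cnj (K (g i) (g j)) = - K i j" if "i < n" "j < n" for i j
    unfolding K_def using Rs[OF that] sg that by (simp add: complex_cnj_divide)
  have RK: "R i j = K i j * complex_of_real (s i * s j)" if "i < n" "j < n" for i j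
    unfolding K_def using spos[OF that(1)] spos[OF that(2)] by simp
  obtain U d where Uo: "\<forall>i<n. \<forall>j<n. (\<Sum>k<n. cnj (U k i) * U k j) = (if i = j then 1 else 0)"
    and Ue: "\<forall>i<n. \<forall>j<n. (\<Sum>k<n. K i k * U k j) = complex_of_real (d j) * U i j"
  proof -
    have Kh': "\<forall>i<n. \<forall>j<n. K j i = cnj (K i j)" by (simp add: Kh)
    show ?thesis using spectral[OF Kh'] that by blast
  qed
  have Ur: "\<forall>i<n. \<forall>j<n. (\<Sum>k<n. U i k * cnj (U j k)) = (if i = j then 1 else 0)"
    using unitary_right[OF Uo] .
  have d0: "d j \<noteq> 0" if j: "j < n" for j
  proof
    assume dj: "d j = 0"
    define x where "x l = U l j / complex_of_real (s l)" for l
    have "\<forall>i<n. (\<Sum>l<n. R i l * x l) = 0"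
    proof (intro allI impI)
      fix i assume i: "i < n"
      have "(\<Sum>l<n. R i l * x l) = (\<Sum>l<n. complex_of_real (s i) * (K i l * U l j))"
      proof (rule sum.cong[OF refl])
        fix l assume "l \<in> {..<n}"
        then have l: "l < n" by simp
        have "s l \<noteq> 0" using spos[OF l] by simp
        then show "R i l * x l = complex_of_real (s i) * (K i l * U l j)"
          unfolding x_def RK[OF i l] by (simp add: field_simps)
      qed
      also have "\<dots> = complex_of_real (s i) * (\<Sum>l<n. K i l * U l j)" by (simp add: sum_distrib_left)
      also have "\<dots> = 0" using Ue i j dj by simp
      finally show "(\<Sum>l<n. R i l * x l) = 0" .
    qed
    then have "\<forall>l<n. x l = 0" by (rule Rinj)
    then have "\<forall>l<n. U l j = 0" unfolding x_def using spos by (metis less_irrefl divide_eq_0_iff of_real_eq_0_iff)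
    then have "(\<Sum>k<n. cnj (U k j) * U k j) = 0" by simp
    then show False using Uo j by simp
  qed
  define V where "V k j = cnj (U (g k) j)" for k j
  have Ve: "(\<Sum>l<n. K i l * V l j) = complex_of_real (- d j) * V i j" if i: "i < n" and j: "j < n" for i j
  proof -
    have "(\<Sum>l<n. K i l * V l j) = (\<Sum>l<n. - cnj (K (g i) (g l) * U (g l) j))"
      unfolding V_def using Ks i by (intro sum.cong refl) simp
    also have "\<dots> = - cnj (\<Sum>l<n. K (g i) (g l) * U (g l) j)" by (simp add: sum_negf)
    also have "(\<Sum>l<n. K (g i) (g l) * U (g l) j) = (\<Sum>l<n. K (g i) l * U l j)"
      by (rule reidx)
    also have "\<dots> = complex_of_real (d j) * U (g i) j" using Ue gn[OF i] j by simp
    finally show ?thesis unfolding V_def by simp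
  qed
  define G where "G k j = (\<Sum>i<n. cnj (U i k) * V i j)" for k j
  have Gsym: "G k j = G j k" for k j
  proof -
    have "G k j = (\<Sum>i<n. cnj (U (g i) k) * cnj (U (g (g i)) j))"
      unfolding G_def V_def by (rule reidx[symmetric])
    also have "\<dots> = (\<Sum>i<n. cnj (U (g i) k) * cnj (U i j))"
      using gg by (intro sum.cong refl) auto
    also have "\<dots> = G j k" unfolding G_def V_def by (simp add: mult.commute)
    finally show ?thesis .
  qed
  have G0: "G k j = 0" if k: "k < n" and j: "j < n" and sgn: "(d k > 0 \<and> d j > 0) \<or> (d k < 0 \<and> d j < 0)" for k j
    unfolding G_def
  proof (rule eig_orth[where K = K and n = n and \<alpha> = "d k" and \<beta> = "- d j"])
    show "\<And>i j. i < n \<Longrightarrow> j < n \<Longrightarrow> cnj (K i j) = K j i" by (rule Kh)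
    show "\<And>i. i < n \<Longrightarrow> (\<Sum>l<n. K i l * U l k) = complex_of_real (d k) * U i k" using Ue k by simp
    show "\<And>i. i < n \<Longrightarrow> (\<Sum>l<n. K i l * V l j) = complex_of_real (- d j) * V i j" using Ve j by simp
    show "d k \<noteq> - d j" using sgn by auto
  qed
  have Vn: "(\<Sum>i<n. cnj (V i j) * V i j) = 1" if j: "j < n" for j
  proof -
    have "(\<Sum>i<n. cnj (V i j) * V i j) = (\<Sum>i<n. cnj (U (g i) j) * U (g i) j)"
      unfolding V_def by (simp add: mult.commute)
    also have "\<dots> = (\<Sum>i<n. cnj (U i j) * U i j)" by (rule reidx)
    also have "\<dots> = 1" using Uo j by simp
    finally show ?thesis .
  qed
  define h where "h k j = cnj (G k j) * G k j" for k j
  have hcol: "(\<Sum>k<n. h k j) = 1" if j: "j < n" for j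
    unfolding h_def G_def using parseval[OF Ur, of "\<lambda>i. V i j"] Vn[OF j] by simp
  have hrow: "(\<Sum>j<n. h k j) = 1" if k: "k < n" for k
    using hcol[OF k] unfolding h_def Gsym[of k] by simp
  define P where "P = {j. j < n \<and> d j > 0}"
  define Q where "Q = {j. j < n \<and> d j < 0}"
  have PQ1: "P \<union> Q = {..<n}"
  proof
    show "P \<union> Q \<subseteq> {..<n}" unfolding P_def Q_def by auto
    show "{..<n} \<subseteq> P \<union> Q"
    proof
      fix x assume "x \<in> {..<n}"
      then have x: "x < n" by simp
      then have "d x \<noteq> 0" by (rule d0)
      then have "d x > 0 \<or> d x < 0" by linarith
      then show "x \<in> P \<union> Q" unfolding P_def Q_def using x by auto
    qed
  qed
  have PQ2: "P \<inter> Q = {}" unfolding P_def Q_def by auto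
  note PQ = PQ1 PQ2
  have fP: "finite P" and fQ: "finite Q" unfolding P_def Q_def by auto
  have cPQ: "card P + card Q = n"
    using card_Un_disjoint[OF fP fQ PQ(2)] PQ(1) by simp
  have hP: "h k j = 0" if "k \<in> P" "j \<in> P" for k j
    using G0[of k j] that unfolding h_def P_def by auto
  have hQ: "h k j = 0" if "k \<in> Q" "j \<in> Q" for k j
    using G0[of k j] that unfolding h_def Q_def by auto
  have "of_nat (card P) = (\<Sum>j\<in>P. (\<Sum>k<n. h k j))"
    using hcol unfolding P_def by simp
  also have "\<dots> = (\<Sum>j\<in>P. (\<Sum>k\<in>Q. h k j))"
  proof (rule sum.cong[OF refl])
    fix j assume j: "j \<in> P"
    show "(\<Sum>k<n. h k j) = (\<Sum>k\<in>Q. h k j)"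
      by (rule sum.mono_neutral_right) (use PQ hP j in auto)
  qed
  also have "\<dots> = (\<Sum>k\<in>Q. (\<Sum>j\<in>P. h k j))" by (rule sum.swap)
  also have "\<dots> = (\<Sum>k\<in>Q. (\<Sum>j<n. h k j))"
  proof (rule sum.cong[OF refl])
    fix k assume k: "k \<in> Q"
    show "(\<Sum>j\<in>P. h k j) = (\<Sum>j<n. h k j)"
      by (rule sum.mono_neutral_left) (use PQ hQ k in auto)
  qed
  also have "\<dots> = of_nat (card Q)"
    using hrow unfolding Q_def by simp
  finally have "card P = card Q" by (simp only: of_nat_eq_iff)
  then have cP: "card P = N" using cPQ n by simp
  obtain \<pi> where \<pi>: "bij_betw \<pi> {0..<N} P" using ex_bij_betw_nat_finite[OF fP] cP by metis
  have \<pi>P: "\<pi> j \<in> P" if "j < N" for j using \<pi> that unfolding bij_betw_def by auto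
  have \<pi>inj: "\<pi> i = \<pi> j \<longleftrightarrow> i = j" if "i < N" "j < N" for i j
    using \<pi> that unfolding bij_betw_def inj_on_def by auto
  define idx where "idx a = (if a < N then a else a - N)" for a
  have idxN: "idx a < N" if "a < n" for a using that unfolding idx_def n by auto
  define pa where "pa a = \<pi> (idx a)" for a
  have pan: "pa a < n" and pad: "d (pa a) > 0" if "a < n" for a
    using \<pi>P[OF idxN[OF that]] unfolding pa_def P_def by auto
  have painj: "pa a = pa b \<longleftrightarrow> a = b" if "a < n" "b < n" "a < N \<longleftrightarrow> b < N" for a b
    unfolding pa_def using \<pi>inj[OF idxN[OF that(1)] idxN[OF that(2)]] that unfolding idx_def n by auto
  define c where "c a = sqrt (d (pa a))" for a
  have cpos: "c a > 0" if "a < n" for a unfolding c_def using pad[OF that] by simp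
  have cc: "c a * c a = d (pa a)" if "a < n" for a unfolding c_def using pad[OF that] by simp
  define f where "f a k = (if a < N then U k (pa a) else V k (pa a))" for a k
  define sgn where "sgn a = (if a < N then 1 else - 1 :: real)" for a
  have feig: "(\<Sum>l<n. K i l * f b l) = complex_of_real (sgn b * d (pa b)) * f b i" if "i < n" "b < n" for i b
    unfolding f_def sgn_def using Ue Ve[OF that(1) pan[OF that(2)]] that pan[OF that(2)] by auto
  have fip: "(\<Sum>k<n. cnj (f a k) * f b k) = (if a = b then 1 else 0)" if a: "a < n" and b: "b < n" for a b
  proof (cases "a < N")
    case aN: True
    show ?thesis
    proof (cases "b < N")
      case True
      then have "(\<Sum>k<n. cnj (f a k) * f b k) = (\<Sum>k<n. cnj (U k (pa a)) * U k (pa b))"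
        unfolding f_def using aN by simp
      also have "\<dots> = (if pa a = pa b then 1 else 0)" using Uo pan a b by simp
      finally show ?thesis using painj[OF a b] aN True by simp
    next
      case False
      then have "(\<Sum>k<n. cnj (f a k) * f b k) = G (pa a) (pa b)"
        unfolding f_def G_def using aN by simp
      also have "\<dots> = 0" using G0[OF pan[OF a] pan[OF b]] pad a b by simp
      finally show ?thesis using aN False by auto
    qed
  next
    case aN: False
    show ?thesis
    proof (cases "b < N")
      case True
      then have "(\<Sum>k<n. cnj (f a k) * f b k) = cnj (G (pa b) (pa a))"
        unfolding f_def G_def using aN by (simp add: mult.commute)
      also have "\<dots> = 0" using G0[OF pan[OF b] pan[OF a]] pad a b by simp
      finally show ?thesis using aN True by auto
    next
      case False
      then have "(\<Sum>k<n. cnj (f a k) * f b k) = (\<Sum>k<n. cnj (cnj (U (g k) (pa a)) * U (g k) (pa b)))"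
        unfolding f_def V_def using aN by (simp add: mult.commute)
      also have "\<dots> = cnj (\<Sum>k<n. cnj (U (g k) (pa a)) * U (g k) (pa b))" by simp
      also have "(\<Sum>k<n. cnj (U (g k) (pa a)) * U (g k) (pa b)) = (\<Sum>k<n. cnj (U k (pa a)) * U k (pa b))"
        by (rule reidx)
      also have "\<dots> = (if pa a = pa b then 1 else 0)" using Uo pan a b by simp
      finally show ?thesis using painj[OF a b] aN False by auto
    qed
  qed
  define T where "T k a = f a k / complex_of_real (s k * c a)" for k a
  define \<mu> where "\<mu> j = 1 / d (\<pi> j)" for j
  have mupos: "\<forall>i<N. \<mu> i > 0"
  proof (intro allI impI)
    fix i assume i: "i < N"
    have "d (\<pi> i) > 0" using \<pi>P[OF i] unfolding P_def by simp
    then show "\<mu> i > 0" unfolding \<mu>_def by simp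
  qed
  have t1: "(\<Sum>k<n. \<Sum>l<n. cnj (T k a) * R k l * T l b) = (if a = b then (if a < N then 1 else -1) else 0)"
    if a: "a < n" and b: "b < n" for a b
  proof -
    have pt: "cnj (T k a) * R k l * T l b = cnj (f a k) * (K k l * f b l) / complex_of_real (c a * c b)"
      if k: "k < n" and l: "l < n" for k l
    proof -
      have "s k \<noteq> 0" "s l \<noteq> 0" "c a \<noteq> 0" "c b \<noteq> 0" using spos[OF k] spos[OF l] cpos[OF a] cpos[OF b] by auto
      then show ?thesis unfolding T_def RK[OF k l] by (simp add: complex_cnj_divide field_simps)
    qed
    have "(\<Sum>k<n. \<Sum>l<n. cnj (T k a) * R k l * T l b)
        = (\<Sum>k<n. \<Sum>l<n. cnj (f a k) * (K k l * f b l) / complex_of_real (c a * c b))"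
      using pt by (intro sum.cong refl) auto
    also have "\<dots> = (\<Sum>k<n. cnj (f a k) * (\<Sum>l<n. K k l * f b l)) / complex_of_real (c a * c b)"
      by (simp add: sum_divide_distrib sum_distrib_left)
    also have "(\<Sum>k<n. cnj (f a k) * (\<Sum>l<n. K k l * f b l))
        = (\<Sum>k<n. complex_of_real (sgn b * d (pa b)) * (cnj (f a k) * f b k))"
      using feig b by (intro sum.cong refl) auto
    also have "\<dots> = complex_of_real (sgn b * d (pa b)) * (if a = b then 1 else 0)"
      unfolding sum_distrib_left[symmetric] fip[OF a b] ..
    finally have X: "(\<Sum>k<n. \<Sum>l<n. cnj (T k a) * R k l * T l b) =
        complex_of_real (sgn b * d (pa b)) * (if a = b then 1 else 0) / complex_of_real (c a * c b)" .
    show ?thesis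
    proof (cases "a = b")
      case True
      have cd: "c a * c b = d (pa b)" using cc[OF a] True by simp
      have dn: "d (pa b) \<noteq> 0" using pad[OF b] by simp
      have "complex_of_real (sgn b * d (pa b)) * 1 / complex_of_real (d (pa b)) = complex_of_real (sgn b)"
        using dn by (simp add: field_simps)
      then show ?thesis unfolding X cd using True unfolding sgn_def by simp
    qed (simp add: X)
  qed
  have t3: "(\<Sum>k<n. cnj (T k a) * complex_of_real (\<omega> k) * T k b) =
        (if a = b then complex_of_real (\<mu> (if a < N then a else a - N)) else 0)"
    if a: "a < n" and b: "b < n" for a b
  proof -
    have pt: "cnj (T k a) * complex_of_real (\<omega> k) * T k b = cnj (f a k) * f b k / complex_of_real (c a * c b)"
      if k: "k < n" for k
    proof -
      have "s k \<noteq> 0" "c a \<noteq> 0" "c b \<noteq> 0" using spos[OF k] cpos[OF a] cpos[OF b] by auto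
      then show ?thesis unfolding T_def ss[OF k, symmetric] by (simp add: complex_cnj_divide field_simps)
    qed
    have "(\<Sum>k<n. cnj (T k a) * complex_of_real (\<omega> k) * T k b)
        = (\<Sum>k<n. cnj (f a k) * f b k) / complex_of_real (c a * c b)"
      using pt by (simp add: sum_divide_distrib)
    also have "\<dots> = (if a = b then 1 else 0) / complex_of_real (c a * c b)" unfolding fip[OF a b] ..
    finally have X: "(\<Sum>k<n. cnj (T k a) * complex_of_real (\<omega> k) * T k b) =
        (if a = b then 1 else 0) / complex_of_real (c a * c b)" .
    show ?thesis
    proof (cases "a = b")
      case True
      have cd: "c a * c b = d (pa a)" using cc[OF a] True by simp
      have "complex_of_real (\<mu> (if a < N then a else a - N)) = 1 / complex_of_real (d (pa a))"
        unfolding \<mu>_def pa_def idx_def by simp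
      then show ?thesis unfolding X cd using True by simp
    qed (simp add: X)
  qed
  have t2: "T a b = cnj (T (g a) (g b))" if a: "a < n" and b: "b < n" for a b
  proof -
    have pg: "pa (g b) = pa b" and cg: "c (g b) = c b"
      unfolding c_def pa_def idx_def g using b n by auto
    show ?thesis
    proof (cases "b < N")
      case True
      then have "\<not> g b < N" unfolding g by simp
      then show ?thesis unfolding T_def f_def pg cg V_def gg[OF a] sg[OF a] using True
        by (simp add: complex_cnj_divide)
    next
      case False
      then have "g b < N" unfolding g using b n by simp
      then show ?thesis unfolding T_def f_def pg cg V_def sg[OF a] using False
        by (simp add: complex_cnj_divide)
    qed
  qed
  show ?thesis using mupos t1 t2 t3 by blast
qed



thm_deps abstract_nm

lemma mult_entry:
  fixes A B :: "'a :: comm_semiring_0 mat"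
  assumes "A \<in> carrier_mat m k" "B \<in> carrier_mat k p" "i < m" "j < p"
  shows "(A * B) $$ (i,j) = (\<Sum>l<k. A $$ (i,l) * B $$ (l,j))"
  using assms by (simp add: scalar_prod_def atLeast0LessThan)

lemma sigma_entry:
  assumes "a < N" "b < N"
  shows "sigma_mat N v L Ls M c $$ (a,b) = (if a = b then 0 else
     2 * \<i> * complex_of_real (v * sqrt (real ((a+1) * (b+1))) * (1 - (-1) ^ ((a+1) + (b+1))))
     / complex_of_real (pi * sqrt (uu v L Ls M c (a+1) * uu v L Ls M c (b+1))
                          * (real ((b+1) ^ 2) - real ((a+1) ^ 2))))"
  using assms unfolding sigma_mat_def Let_def by simp

lemma sig_props:
  fixes X Y :: "nat \<Rightarrow> nat \<Rightarrow> real" and a b :: nat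
  assumes Xs: "X b a = X a b" and Ys: "Y b a = - Y a b"
  shows "cnj (if a = b then 0 else 2 * \<i> * complex_of_real (X a b) / complex_of_real (Y a b))
      = (if b = a then 0 else 2 * \<i> * complex_of_real (X b a) / complex_of_real (Y b a))"
    "cnj (if a = b then 0 else 2 * \<i> * complex_of_real (X a b) / complex_of_real (Y a b))
      = - (if a = b then 0 else 2 * \<i> * complex_of_real (X a b) / complex_of_real (Y a b))"
proof -
  show "cnj (if a = b then 0 else 2 * \<i> * complex_of_real (X a b) / complex_of_real (Y a b))
      = - (if a = b then 0 else 2 * \<i> * complex_of_real (X a b) / complex_of_real (Y a b))"
    by (simp add: complex_cnj_divide)
  then show "cnj (if a = b then 0 else 2 * \<i> * complex_of_real (X a b) / complex_of_real (Y a b))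
      = (if b = a then 0 else 2 * \<i> * complex_of_real (X b a) / complex_of_real (Y b a))"
    using Xs Ys by (auto simp: complex_cnj_divide)
qed

lemma sigma_props:
  assumes "a < N" "b < N"
  shows "cnj (sigma_mat N v L Ls M c $$ (a,b)) = sigma_mat N v L Ls M c $$ (b,a)"
    "cnj (sigma_mat N v L Ls M c $$ (a,b)) = - sigma_mat N v L Ls M c $$ (a,b)"
proof -
  define X where "X a b = v * sqrt (real ((a+1) * (b+1))) * (1 - (-1) ^ ((a+1) + (b+1)))" for a b :: nat
  define Y where "Y a b = pi * sqrt (uu v L Ls M c (a+1) * uu v L Ls M c (b+1))
                          * (real ((b+1) ^ 2) - real ((a+1) ^ 2))" for a b :: nat
  have Xs: "X b a = X a b" unfolding X_def by (simp add: ac_simps)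
  have Ys: "Y b a = - Y a b" unfolding Y_def by (simp add: algebra_simps)
  have e1: "sigma_mat N v L Ls M c $$ (a,b) = (if a = b then 0 else 2 * \<i> * complex_of_real (X a b) / complex_of_real (Y a b))"
    unfolding X_def Y_def using sigma_entry[OF assms] .
  have e2: "sigma_mat N v L Ls M c $$ (b,a) = (if b = a then 0 else 2 * \<i> * complex_of_real (X b a) / complex_of_real (Y b a))"
    unfolding X_def Y_def using sigma_entry[OF assms(2,1)] .
  show "cnj (sigma_mat N v L Ls M c $$ (a,b)) = sigma_mat N v L Ls M c $$ (b,a)"
    unfolding e1 e2 using sig_props(1)[of X b a Y, OF Xs Ys] .
  show "cnj (sigma_mat N v L Ls M c $$ (a,b)) = - sigma_mat N v L Ls M c $$ (a,b)"
    unfolding e1 using sig_props(2)[of X b a Y, OF Xs Ys] .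
qed

lemma R_entry:
  assumes "i < 2 * N" "j < 2 * N"
  shows "R_mat N v L Ls M c $$ (i,j) = (if i = j then (if i < N then 1 else -1) else 0)
     - sigma_mat N v L Ls M c $$ (if i < N then i else i - N, if j < N then j else j - N)"
  using assms unfolding R_mat_def Let_def Sigma_mat_def by (auto simp: sigma_mat_def)

lemma Gamma_entry:
  assumes "i < 2 * N" "j < 2 * N"
  shows "Gamma_mat N $$ (i,j) = (if j = (if i < N then i + N else i - N) then 1 else 0)"
  using assms unfolding Gamma_mat_def by auto

lemma Sigma_entry:
  assumes "i < 2 * N" "j < 2 * N"
  shows "Sigma_mat N $$ (i,j) = (if i = j then (if i < N then 1 else -1) else 0)"
  using assms unfolding Sigma_mat_def by auto

lemma Omega_entry:
  assumes "i < 2 * N" "j < 2 * N"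
  shows "Omega_real N v L Ls M c $$ (i,j) =
    (let k = (if i < N then i else i - N);
         r = real (k + 1) * uu v L Ls M c (k + 1) * epsn v L Ls M c (k + 1);
         x = - (real (k + 1) * uu v L Ls M c (k + 1) * (1 - epsn v L Ls M c (k + 1)))
     in if i = j then r else if j = (if i < N then i + N else i - N) then x else 0)"
  using assms unfolding Omega_real_def Let_def by (auto simp: rho_mat_def xi_mat_def mat_diag_def)

lemma carriers:
  "R_mat N v L Ls M c \<in> carrier_mat (2*N) (2*N)"
  "Omega_real N v L Ls M c \<in> carrier_mat (2*N) (2*N)"
  "Omega_mat N v L Ls M c \<in> carrier_mat (2*N) (2*N)"
  "Sigma_mat N \<in> carrier_mat (2*N) (2*N)"
  "Gamma_mat N \<in> carrier_mat (2*N) (2*N)"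
  unfolding R_mat_def Let_def Sigma_mat_def Omega_mat_def Omega_real_def Gamma_mat_def
    sigma_mat_def rho_mat_def xi_mat_def mat_diag_def by auto

theorem lemma4:
  fixes N M :: nat and v L Ls :: real and c :: "nat \<Rightarrow> real"
  assumes "N \<ge> 1" and "\<bar>v\<bar> < 1" and "L > 0" and "Ls \<ge> 0" and "M \<ge> 1" and "c 1 = 1"
    and "\<forall>n \<in> {1..N}. (Ffun M c Ls (kk L n))\<^sup>2 \<noteq> v\<^sup>2 * (kk L n)\<^sup>2"
    and "invertible_mat (R_mat N v L Ls M c)"
    and "pos_def_mat (Omega_real N v L Ls M c)"
  shows "\<exists>T. normal_mode_transformation N v L Ls M c T"
proof -
  define n where "n = 2 * N"
  define g where "g = (\<lambda>i::nat. if i < N then i + N else i - N)"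
  define idx where "idx i = (if i < N then i else i - N)" for i :: nat
  define Rm where "Rm = R_mat N v L Ls M c"
  define Om where "Om = Omega_real N v L Ls M c"
  define uf where "uf = uu v L Ls M c"
  define ef where "ef = epsn v L Ls M c"
  have Rm: "Rm \<in> carrier_mat n n" and Om: "Om \<in> carrier_mat n n"
    unfolding Rm_def Om_def n_def using carriers by auto
  have gn: "g i < n" if "i < n" for i using that unfolding g_def n_def by auto
  have gg: "g (g i) = i" if "i < n" for i using that unfolding g_def n_def by auto
  have idxN: "idx i < N" if "i < n" for i using that unfolding idx_def n_def by auto
  have idxg: "idx (g i) = idx i" if "i < n" for i using that unfolding idx_def g_def n_def by auto
  have Odiag: "Om $$ (i,i) = real (idx i + 1) * uf (idx i + 1) * ef (idx i + 1)" if "i < n" for i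
    using Omega_entry[of i N i v L Ls M c] that unfolding Om_def n_def idx_def uf_def ef_def Let_def by simp
  have posk: "ef (k + 1) = 1 \<and> uf (k + 1) > 0" if k: "k < N" for k
  proof -
    have kn: "k < n" using k unfolding n_def by simp
    define x where "x = (unit_vec n k :: real vec)"
    have x: "x \<in> carrier_vec (dim_row Om)" using Om unfolding x_def by simp
    have x0: "x \<noteq> 0\<^sub>v (dim_row Om)"
    proof
      assume "x = 0\<^sub>v (dim_row Om)"
      then have "x $ k = 0" using kn Om by simp
      then show False using kn unfolding x_def by simp
    qed
    have "x \<bullet> (Om *\<^sub>v x) > 0" using assms(9) x x0 unfolding pos_def_mat_def Om_def by blast
    moreover have "x \<bullet> (Om *\<^sub>v x) = Om $$ (k,k)"
    proof -
      have "Om *\<^sub>v x \<in> carrier_vec n" using Om x by simp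
      then have "x \<bullet> (Om *\<^sub>v x) = (Om *\<^sub>v x) $ k" unfolding x_def using kn by simp
      also have "\<dots> = row Om k \<bullet> x" using Om kn by simp
      also have "\<dots> = row Om k $ k" unfolding x_def using kn by simp
      also have "\<dots> = Om $$ (k,k)" using Om kn by simp
      finally show ?thesis .
    qed
    ultimately have "Om $$ (k,k) > 0" by simp
    then have p: "real (k + 1) * uf (k + 1) * ef (k + 1) > 0" using Odiag[OF kn] k unfolding idx_def by simp
    then have "ef (k + 1) \<noteq> 0" by auto
    then have e1: "ef (k + 1) = 1" unfolding ef_def epsn_def by (auto split: if_splits)
    then have "uf (k + 1) > 0" using p by (simp add: zero_less_mult_iff)
    then show ?thesis using e1 by simp
  qed
  define \<omega> where "\<omega> i = real (idx i + 1) * uf (idx i + 1)" for i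
  have Oent: "Om $$ (i,j) = (if i = j then \<omega> i else 0)" if "i < n" "j < n" for i j
  proof -
    have e: "ef (idx i + 1) = 1" using posk[OF idxN[OF that(1)]] by simp
    show ?thesis
      using Omega_entry[of i N j v L Ls M c] that e unfolding Om_def n_def idx_def uf_def ef_def Let_def \<omega>_def
      by auto
  qed
  have wpos: "\<omega> i > 0" if "i < n" for i
    using posk[OF idxN[OF that]] unfolding \<omega>_def by simp
  have wg: "\<omega> (g i) = \<omega> i" if "i < n" for i unfolding \<omega>_def using idxg[OF that] by simp
  define R where "R i j = Rm $$ (i,j)" for i j
  define sg where "sg a b = sigma_mat N v L Ls M c $$ (a,b)" for a b
  have Rent: "R i j = (if i = j then (if i < N then 1 else -1) else 0) - sg (idx i) (idx j)"
    if "i < n" "j < n" for i j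
    unfolding R_def Rm_def sg_def idx_def using R_entry[of i N j] that n_def by simp
  have Rh: "cnj (R i j) = R j i" if "i < n" "j < n" for i j
  proof -
    have "cnj (sg (idx i) (idx j)) = sg (idx j) (idx i)"
      unfolding sg_def using sigma_props(1)[OF idxN[OF that(1)] idxN[OF that(2)]] .
    then show ?thesis unfolding Rent[OF that] Rent[OF that(2,1)] by auto
  qed
  have Rs: "cnj (R (g i) (g j)) = - R i j" if "i < n" "j < n" for i j
  proof -
    have "cnj (sg (idx i) (idx j)) = - sg (idx i) (idx j)"
      unfolding sg_def using sigma_props(2)[OF idxN[OF that(1)] idxN[OF that(2)]] .
    moreover have "g i = g j \<longleftrightarrow> i = j" using gg that by metis
    moreover have "g i < N \<longleftrightarrow> \<not> i < N" using that unfolding g_def n_def by auto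
    ultimately show ?thesis unfolding Rent[OF gn[OF that(1)] gn[OF that(2)]] Rent[OF that]
      idxg[OF that(1)] idxg[OF that(2)] by auto
  qed
  obtain B where RB: "Rm * B = 1\<^sub>m n" and BR: "B * Rm = 1\<^sub>m n" and B: "B \<in> carrier_mat n n"
  proof -
    obtain B where i1: "inverts_mat Rm B" and i2: "inverts_mat B Rm"
      using assms(8) unfolding invertible_mat_def Rm_def by blast
    have 1: "Rm * B = 1\<^sub>m n" using i1 Rm unfolding inverts_mat_def by simp
    have "dim_col B = n" using arg_cong[OF 1, of dim_col] by simp
    have 2: "B * Rm = 1\<^sub>m (dim_row B)" using i2 unfolding inverts_mat_def by simp
    have "dim_row B = n" using arg_cong[OF 2, of dim_col] Rm by simp
    then show ?thesis using that 1 2 \<open>dim_col B = n\<close> by auto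
  qed
  have Rinj: "\<forall>l<n. x l = 0" if hx: "\<forall>i<n. (\<Sum>l<n. R i l * x l) = 0" for x
  proof (intro allI impI)
    fix l assume l: "l < n"
    have "x l = (\<Sum>m<n. (if l = m then 1 else 0) * x m)" using l by (simp add: delta_sum_left)
    also have "\<dots> = (\<Sum>m<n. (\<Sum>i<n. B $$ (l,i) * R i m) * x m)"
    proof (rule sum.cong[OF refl])
      fix m assume "m \<in> {..<n}"
      then have m: "m < n" by simp
      have "(B * Rm) $$ (l,m) = (\<Sum>i<n. B $$ (l,i) * Rm $$ (i,m))" by (rule mult_entry[OF B Rm l m])
      then show "(if l = m then 1 else 0) * x m = (\<Sum>i<n. B $$ (l,i) * R i m) * x m"
        unfolding BR R_def using l m by simp
    qed
    also have "\<dots> = (\<Sum>i<n. B $$ (l,i) * (\<Sum>m<n. R i m * x m))" by (rule mm_assoc[symmetric])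
    also have "\<dots> = 0" using hx by simp
    finally show "x l = 0" .
  qed
  obtain T \<mu> where mupos: "\<forall>i<N. \<mu> i > 0"
    and t1: "\<forall>a<n. \<forall>b<n. (\<Sum>k<n. \<Sum>l<n. cnj (T k a) * R k l * T l b) = (if a = b then (if a < N then 1 else -1) else 0)"
    and t2: "\<forall>a<n. \<forall>b<n. T a b = cnj (T (g a) (g b))"
    and t3: "\<forall>a<n. \<forall>b<n. (\<Sum>k<n. cnj (T k a) * complex_of_real (\<omega> k) * T k b) =
        (if a = b then complex_of_real (\<mu> (if a < N then a else a - N)) else 0)"
    using abstract_nm[where N=N and n=n and R=R and \<omega>=\<omega> and g=g, OF n_def g_def Rh Rs Rinj wpos wg] by blast
  define TM where "TM = mat n n (\<lambda>(i,j). T i j)"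
  have TM: "TM \<in> carrier_mat n n" unfolding TM_def by simp
  define AT where "AT = Defs.adj_mat TM"
  have AT: "AT \<in> carrier_mat n n" unfolding AT_def Defs.adj_mat_def TM_def by simp
  have ATe: "AT $$ (a,k) = cnj (T k a)" if "a < n" "k < n" for a k
    unfolding AT_def Defs.adj_mat_def TM_def using that by simp
  have TMe: "TM $$ (k,b) = T k b" if "k < n" "b < n" for k b
    unfolding TM_def using that by simp
  define S where "S = Sigma_mat N"
  have S: "S \<in> carrier_mat n n" unfolding S_def n_def using carriers by auto
  have Se: "S $$ (i,j) = (if i = j then (if i < N then 1 else -1) else 0)" if "i < n" "j < n" for i j
    unfolding S_def using Sigma_entry that n_def by simp
  define Ga where "Ga = Gamma_mat N"
  have Ga: "Ga \<in> carrier_mat n n" unfolding Ga_def n_def using carriers by auto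
  have Gae: "Ga $$ (i,j) = (if j = g i then 1 else 0)" if "i < n" "j < n" for i j
    unfolding Ga_def g_def using Gamma_entry that n_def by simp
  have Gae2: "Ga $$ (l,j) = (if l = g j then 1 else 0)" if "l < n" "j < n" for l j
  proof -
    have "j = g l \<longleftrightarrow> l = g j" using gg that by metis
    then show ?thesis using Gae[OF that] by simp
  qed
  define OmC where "OmC = Omega_mat N v L Ls M c"
  have OmC: "OmC \<in> carrier_mat n n" unfolding OmC_def n_def using carriers by auto
  have OmCe: "OmC $$ (k,l) = (if k = l then complex_of_real (\<omega> k) else 0)" if "k < n" "l < n" for k l
    unfolding OmC_def Omega_mat_def using Oent[OF that] that Om unfolding Om_def by simp
  have P1: "AT * Rm * TM = S"
  proof (rule eq_matI)
    fix a b assume "a < dim_row S" "b < dim_col S"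
    then have a: "a < n" and b: "b < n" using S by auto
    have "(AT * Rm * TM) $$ (a,b) = (\<Sum>l<n. (AT * Rm) $$ (a,l) * TM $$ (l,b))"
      by (rule mult_entry[OF mult_carrier_mat[OF AT Rm] TM a b])
    also have "\<dots> = (\<Sum>l<n. (\<Sum>k<n. cnj (T k a) * R k l) * T l b)"
    proof (rule sum.cong[OF refl])
      fix l assume "l \<in> {..<n}"
      then have l: "l < n" by simp
      have "(AT * Rm) $$ (a,l) = (\<Sum>k<n. AT $$ (a,k) * Rm $$ (k,l))" by (rule mult_entry[OF AT Rm a l])
      also have "\<dots> = (\<Sum>k<n. cnj (T k a) * R k l)" using ATe a unfolding R_def by simp
      finally show "(AT * Rm) $$ (a,l) * TM $$ (l,b) = (\<Sum>k<n. cnj (T k a) * R k l) * T l b"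
        using TMe[OF l b] by simp
    qed
    also have "\<dots> = (\<Sum>k<n. cnj (T k a) * (\<Sum>l<n. R k l * T l b))" by (rule mm_assoc[symmetric])
    also have "\<dots> = (\<Sum>k<n. \<Sum>l<n. cnj (T k a) * R k l * T l b)"
      by (simp add: sum_distrib_left mult.assoc)
    also have "\<dots> = S $$ (a,b)" using t1 a b Se[OF a b] by simp
    finally show "(AT * Rm * TM) $$ (a,b) = S $$ (a,b)" .
  qed (use S AT Rm TM in auto)
  have P2: "TM = Ga * conj_mat TM * Ga"
  proof (rule eq_matI)
    fix i j assume "i < dim_row (Ga * conj_mat TM * Ga)" "j < dim_col (Ga * conj_mat TM * Ga)"
    then have i: "i < n" and j: "j < n" using Ga by auto
    have CT: "conj_mat TM \<in> carrier_mat n n" unfolding conj_mat_def using TM by simp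
    have CTe: "conj_mat TM $$ (k,l) = cnj (T k l)" if "k < n" "l < n" for k l
      unfolding conj_mat_def using TMe[OF that] that TM by simp
    have "(Ga * conj_mat TM * Ga) $$ (i,j) = (\<Sum>l<n. (Ga * conj_mat TM) $$ (i,l) * Ga $$ (l,j))"
      by (rule mult_entry[OF mult_carrier_mat[OF Ga CT] Ga i j])
    also have "\<dots> = (\<Sum>l<n. cnj (T (g i) l) * (if l = g j then 1 else 0))"
    proof (rule sum.cong[OF refl])
      fix l assume "l \<in> {..<n}"
      then have l: "l < n" by simp
      have "(Ga * conj_mat TM) $$ (i,l) = (\<Sum>k<n. Ga $$ (i,k) * conj_mat TM $$ (k,l))"
        by (rule mult_entry[OF Ga CT i l])
      also have "\<dots> = (\<Sum>k<n. (if g i = k then 1 else 0) * cnj (T k l))"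
        using Gae[OF i] CTe l by (intro sum.cong refl) auto
      also have "\<dots> = cnj (T (g i) l)" using gn[OF i] by (rule delta_sum_left)
      finally show "(Ga * conj_mat TM) $$ (i,l) * Ga $$ (l,j) = cnj (T (g i) l) * (if l = g j then 1 else 0)"
        using Gae2[OF l j] by simp
    qed
    also have "\<dots> = cnj (T (g i) (g j))" using gn[OF j] by (rule delta_sum_right)
    also have "\<dots> = T i j" using t2 i j by simp
    finally show "TM $$ (i,j) = (Ga * conj_mat TM * Ga) $$ (i,j)" using TMe[OF i j] by simp
  qed (use TM Ga in auto)
  define IR where "IR = inv_mat Rm"
  have IRp: "IR \<in> carrier_mat n n \<and> Rm * IR = 1\<^sub>m n \<and> IR * Rm = 1\<^sub>m n"
  proof -
    have ex: "\<exists>B. B \<in> carrier_mat (dim_row Rm) (dim_row Rm) \<and> Rm * B = 1\<^sub>m (dim_row Rm) \<and> B * Rm = 1\<^sub>m (dim_row Rm)"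
      using B RB BR Rm by auto
    show ?thesis using someI_ex[OF ex] Rm unfolding IR_def inv_mat_def by simp
  qed
  then have IR: "IR \<in> carrier_mat n n" and RIR: "Rm * IR = 1\<^sub>m n" by auto
  have RIRX: "Rm * (IR * X) = X" if "X \<in> carrier_mat n n" for X
  proof -
    have "Rm * (IR * X) = (Rm * IR) * X" using Rm IR that by simp
    also have "\<dots> = X" unfolding RIR using that by simp
    finally show ?thesis .
  qed
  have alg: "(S * AT * Rm) * (IR * OmC) * TM = S * (AT * OmC * TM)"
  proof -
    have SAT: "S * AT \<in> carrier_mat n n" using S AT by simp
    have X1: "S * AT * Rm \<in> carrier_mat n n" using SAT Rm by simp
    have IO: "IR * OmC \<in> carrier_mat n n" using IR OmC by simp
    have OT: "OmC * TM \<in> carrier_mat n n" using OmC TM by simp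
    have IOT: "IR * (OmC * TM) \<in> carrier_mat n n" using IR OT by simp
    have "(S * AT * Rm) * (IR * OmC) * TM = (S * AT * Rm) * ((IR * OmC) * TM)"
      by (rule assoc_mult_mat[OF X1 IO TM])
    also have "(IR * OmC) * TM = IR * (OmC * TM)" by (rule assoc_mult_mat[OF IR OmC TM])
    also have "(S * AT * Rm) * (IR * (OmC * TM)) = (S * AT) * (Rm * (IR * (OmC * TM)))"
      by (rule assoc_mult_mat[OF SAT Rm IOT])
    also have "Rm * (IR * (OmC * TM)) = OmC * TM" by (rule RIRX[OF OT])
    also have "(S * AT) * (OmC * TM) = S * (AT * (OmC * TM))" by (rule assoc_mult_mat[OF S AT OT])
    also have "AT * (OmC * TM) = AT * OmC * TM" by (rule assoc_mult_mat[OF AT OmC TM, symmetric])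
    finally show ?thesis .
  qed
  have P3: "(S * AT * Rm) * (IR * OmC) * TM =
      mat_diag n (\<lambda>j. if j < N then complex_of_real (\<mu> j) else complex_of_real (- \<mu> (j - N)))"
  proof (rule eq_matI)
    fix a b assume "a < dim_row (mat_diag n (\<lambda>j. if j < N then complex_of_real (\<mu> j) else complex_of_real (- \<mu> (j - N))))"
      "b < dim_col (mat_diag n (\<lambda>j. if j < N then complex_of_real (\<mu> j) else complex_of_real (- \<mu> (j - N))))"
    then have a: "a < n" and b: "b < n" by (auto simp: mat_diag_def)
    have Y: "AT * OmC * TM \<in> carrier_mat n n" using AT OmC TM by simp
    have Ye: "(AT * OmC * TM) $$ (k,b) = (if k = b then complex_of_real (\<mu> (if k < N then k else k - N)) else 0)"
      if k: "k < n" for k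
    proof -
      have "(AT * OmC * TM) $$ (k,b) = (\<Sum>l<n. (AT * OmC) $$ (k,l) * TM $$ (l,b))"
        by (rule mult_entry[OF mult_carrier_mat[OF AT OmC] TM k b])
      also have "\<dots> = (\<Sum>l<n. cnj (T l k) * complex_of_real (\<omega> l) * T l b)"
      proof (rule sum.cong[OF refl])
        fix l assume "l \<in> {..<n}"
        then have l: "l < n" by simp
        have "(AT * OmC) $$ (k,l) = (\<Sum>m<n. AT $$ (k,m) * OmC $$ (m,l))" by (rule mult_entry[OF AT OmC k l])
        also have "\<dots> = (\<Sum>m<n. cnj (T m k) * (if m = l then complex_of_real (\<omega> l) else 0))"
          using ATe[OF k] OmCe l by (intro sum.cong refl) auto
        also have "\<dots> = cnj (T l k) * complex_of_real (\<omega> l)"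
        proof -
          have "(\<Sum>m<n. cnj (T m k) * (if m = l then complex_of_real (\<omega> l) else 0))
              = (\<Sum>m<n. (cnj (T m k) * complex_of_real (\<omega> l)) * (if m = l then 1 else 0))"
            by (intro sum.cong refl) auto
          also have "\<dots> = cnj (T l k) * complex_of_real (\<omega> l)" using l by (rule delta_sum_right)
          finally show ?thesis .
        qed
        finally show "(AT * OmC) $$ (k,l) * TM $$ (l,b) = cnj (T l k) * complex_of_real (\<omega> l) * T l b"
          using TMe[OF l b] by simp
      qed
      also have "\<dots> = (if k = b then complex_of_real (\<mu> (if k < N then k else k - N)) else 0)"
        using t3 k b by simp
      finally show ?thesis .
    qed
    have "((S * AT * Rm) * (IR * OmC) * TM) $$ (a,b) = (S * (AT * OmC * TM)) $$ (a,b)" unfolding alg ..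
    also have "\<dots> = (\<Sum>k<n. S $$ (a,k) * (AT * OmC * TM) $$ (k,b))" by (rule mult_entry[OF S Y a b])
    also have "\<dots> = (\<Sum>k<n. (if a = k then 1 else 0) * ((if a < N then 1 else -1) * (AT * OmC * TM) $$ (k,b)))"
      using Se[OF a] by (intro sum.cong refl) auto
    also have "\<dots> = (if a < N then 1 else -1) * (AT * OmC * TM) $$ (a,b)" using a by (rule delta_sum_left)
    also have "\<dots> = mat_diag n (\<lambda>j. if j < N then complex_of_real (\<mu> j) else complex_of_real (- \<mu> (j - N))) $$ (a,b)"
      unfolding Ye[OF a] using a b by (auto simp: mat_diag_def)
    finally show "((S * AT * Rm) * (IR * OmC) * TM) $$ (a,b) =
      mat_diag n (\<lambda>j. if j < N then complex_of_real (\<mu> j) else complex_of_real (- \<mu> (j - N))) $$ (a,b)" .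
  qed (use S AT Rm IR OmC TM in \<open>auto simp: mat_diag_def\<close>)
  have "normal_mode_transformation N v L Ls M c TM"
    unfolding normal_mode_transformation_def
  proof (intro conjI exI[of _ \<mu>])
    show "TM \<in> carrier_mat (2 * N) (2 * N)" using TM n_def by simp
    show "Defs.adj_mat TM * R_mat N v L Ls M c * TM = Sigma_mat N" using P1 unfolding AT_def Rm_def S_def .
    show "TM = Gamma_mat N * conj_mat TM * Gamma_mat N" using P2 unfolding Ga_def .
    show "\<forall>i<N. 0 < \<mu> i" by (rule mupos)
    show "Sigma_mat N * Defs.adj_mat TM * R_mat N v L Ls M c * D_mat N v L Ls M c * TM =
      mat_diag (2 * N) (\<lambda>j. if j < N then complex_of_real (\<mu> j) else complex_of_real (- \<mu> (j - N)))"
      using P3 unfolding S_def AT_def Rm_def IR_def OmC_def D_mat_def n_def by simp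
  qed
  then show ?thesis by blast
qed


thm_deps lemma4

end
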